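(* Let $X$ be a random variable taking values in a set $\mathcal{X}$, $Y \in [0,1]$ a target outcome and $\hat{Y} \in [0,1]$ an expert prediction, all jointly distributed. Let $\mathcal{F}$ be a class of functions $\mathcal{X} \to [0,1]$, $\alpha \ge 0$, and let $S \subseteq \mathcal{X}$ be $\alpha$-indistinguishable with respect to $\mathcal{F}$ and $Y$. Let $g : [0,1] \to [0,1]$ satisfy, for some $\eta \ge 0$, $$\mathbb{E}_S[(Y - g(\hat{Y}))^2] \le \mathbb{E}_S[(Y - \mathbb{E}_S[Y \mid \hat{Y}])^2] + \eta.$$ Then for every $f \in \mathcal{F}$, $$\mathbb{E}_S[(Y - g(\hat{Y}))^2] + 4\,\mathrm{Cov}_S(Y, \hat{Y})^2 \le \mathbb{E}_S[(Y - f(X))^2] + 2\alpha + \eta.$$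
   Context: For $S \subseteq \mathcal{X}$ with $\mathbb{P}(X \in S) > 0$, $\mathbb{E}_S$, $\mathrm{Cov}_S$ and $\mathbb{E}_S[\cdot \mid \hat{Y}]$ denote expectation, covariance and conditional expectation conditional on $\{X \in S\}$. A set $S$ is $\alpha$-indistinguishable with respect to $\mathcal{F}$ and $Y$ if $|\mathrm{Cov}(f(X), Y \mid X \in S)| \le \alpha$ for all $f \in \mathcal{F}$. *)

theory Defs
  imports "HOL-Probability.Probability"
begin

definition cond_event :: "'a measure \<Rightarrow> ('a \<Rightarrow> 'x) \<Rightarrow> 'x set \<Rightarrow> 'a measure" where
  "cond_event M X S = uniform_measure M {\<omega> \<in> space M. X \<omega> \<in> S}"

definition covariance :: "'a measure \<Rightarrow> ('a \<Rightarrow> real) \<Rightarrow> ('a \<Rightarrow> real) \<Rightarrow> real" where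
  "covariance M U V =
     (\<integral>\<omega>. (U \<omega> - (\<integral>x. U x \<partial>M)) * (V \<omega> - (\<integral>x. V x \<partial>M)) \<partial>M)"

definition alpha_indist ::
  "'a measure \<Rightarrow> ('a \<Rightarrow> 'x) \<Rightarrow> ('x \<Rightarrow> real) set \<Rightarrow> ('a \<Rightarrow> real) \<Rightarrow> 'x set \<Rightarrow> real \<Rightarrow> bool" where
  "alpha_indist M X F Y S \<alpha> \<longleftrightarrow>
     (\<forall>f\<in>F. \<bar>covariance (cond_event M X S) (\<lambda>\<omega>. f (X \<omega>)) Y\<bar> \<le> \<alpha>)"

definition cond_exp_given :: "'a measure \<Rightarrow> ('a \<Rightarrow> real) \<Rightarrow> ('a \<Rightarrow> real) \<Rightarrow> 'a \<Rightarrow> real" where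
  "cond_exp_given M Y Yh = real_cond_exp M (vimage_algebra (space M) Yh borel) Y"

end

theory Submission
  imports Defs
begin


lemma bnd_int:
  fixes f :: "_ \<Rightarrow> real"
  assumes "prob_space P" "f \<in> borel_measurable P" "AE x in P. \<bar>f x\<bar> \<le> B"
  shows "integrable P f"
proof -
  interpret prob_space P by fact
  show ?thesis
    proof (rule Bochner_Integration.integrable_bound[OF _ assms(2)])
    show "integrable P (\<lambda>_. B)" by simp
    show "AE x in P. norm (f x) \<le> norm B" using assms(3) by eventually_elim auto
  qed
qed

lemma prod_shift_eq:
  fixes U V :: "_ \<Rightarrow> real"
  shows "(\<lambda>x. (U x - a) * (V x - b)) = (\<lambda>x. U x * V x - b * U x - a * V x + a * b)"
  by (auto simp: fun_eq_iff algebra_simps)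

lemma int_shift:
  fixes U V :: "_ \<Rightarrow> real"
  assumes "prob_space P" "integrable P U" "integrable P V" "integrable P (\<lambda>x. U x * V x)"
  shows "integrable P (\<lambda>x. (U x - a) * (V x - b))"
    "(\<integral>x. (U x - a) * (V x - b) \<partial>P) = (\<integral>x. U x * V x \<partial>P) - b * (\<integral>x. U x \<partial>P) - a * (\<integral>x. V x \<partial>P) + a * b"
proof -
  interpret prob_space P by fact
  show "integrable P (\<lambda>x. (U x - a) * (V x - b))"
    unfolding prod_shift_eq using assms by auto
  show "(\<integral>x. (U x - a) * (V x - b) \<partial>P) = (\<integral>x. U x * V x \<partial>P) - b * (\<integral>x. U x \<partial>P) - a * (\<integral>x. V x \<partial>P) + a * b"
    unfolding prod_shift_eq using assms by (simp add: prob_space)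
qed

lemma cov_expand:
  assumes "prob_space P" "integrable P U" "integrable P V" "integrable P (\<lambda>x. U x * V x)"
  shows "covariance P U V = (\<integral>x. U x * V x \<partial>P) - (\<integral>x. U x \<partial>P) * (\<integral>x. V x \<partial>P)"
  unfolding covariance_def int_shift(2)[OF assms] by (simp add: algebra_simps)

lemma cov_self_nonneg: "covariance P U U \<ge> 0"
  unfolding covariance_def by (rule integral_nonneg_AE) auto


lemma ae_prod_bnd:
  fixes Z W :: "_ \<Rightarrow> real"
  assumes "AE x in P. Z x \<in> {0..1}" "\<And>x. x \<in> space P \<Longrightarrow> W x \<in> {0..1}"
  shows "AE x in P. \<bar>Z x * W x\<bar> \<le> 1"
  using assms(1) AE_space
proof eventually_elim
  case (elim x)
  then show ?case using assms(2)[of x] by (auto simp: abs_mult intro: mult_le_one)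
qed

lemma abstract_main:
  fixes Y Yh h :: "'a \<Rightarrow> real"
  assumes P: "prob_space P" and G: "subalgebra P G"
    and [measurable]: "Y \<in> borel_measurable P" "Yh \<in> borel_measurable G" "h \<in> borel_measurable P"
    and Yb: "\<And>x. x \<in> space P \<Longrightarrow> Y x \<in> {0..1}"
    and Yhb: "\<And>x. x \<in> space P \<Longrightarrow> Yh x \<in> {0..1}"
    and hb: "\<And>x. x \<in> space P \<Longrightarrow> h x \<in> {0..1}"
    and cov: "\<bar>covariance P h Y\<bar> \<le> \<alpha>"
  shows "(\<integral>x. (Y x - real_cond_exp P G Y x)\<^sup>2 \<partial>P) + 4 * (covariance P Y Yh)\<^sup>2
         \<le> (\<integral>x. (Y x - h x)\<^sup>2 \<partial>P) + 2 * \<alpha>"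
proof -
  interpret prob_space P by fact
  interpret finite_measure_subalgebra P G
    by unfold_locales (rule G)
  define Z where "Z = real_cond_exp P G Y"
  have YhP[measurable]: "Yh \<in> borel_measurable P"
    using measurable_from_subalg[OF G] assms(4) by blast
  have ZG[measurable]: "Z \<in> borel_measurable G" unfolding Z_def by simp
  have ZP[measurable]: "Z \<in> borel_measurable P"
    using measurable_from_subalg[OF G ZG] .
  have iY: "integrable P Y" by (rule bnd_int[OF P _, where B=1]) (use Yb in auto)
  have iYh: "integrable P Yh" by (rule bnd_int[OF P _, where B=1]) (use Yhb in auto)
  have ih: "integrable P h" by (rule bnd_int[OF P _, where B=1]) (use hb in auto)
  have Zge: "AE x in P. Z x \<ge> 0" unfolding Z_def
    by (rule real_cond_exp_ge_c[OF iY]) (use Yb in auto)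
  have Zle: "AE x in P. Z x \<le> 1" unfolding Z_def
    by (rule real_cond_exp_le_c[OF iY]) (use Yb in auto)
  have Zb: "AE x in P. Z x \<in> {0..1}" using Zge Zle by eventually_elim auto
  have iZ: "integrable P Z" by (rule bnd_int[OF P _, where B=1]) (use Zb in auto)
  have iZZ: "integrable P (\<lambda>x. Z x * Z x)" 
    by (rule bnd_int[OF P _, where B=1]) (use Zb in \<open>auto simp: abs_mult intro: mult_le_one\<close>)
  have iZY: "integrable P (\<lambda>x. Z x * Y x)" 
    by (rule bnd_int[OF P _, where B=1]) (use ae_prod_bnd[OF Zb Yb] in auto)
  have iZYh: "integrable P (\<lambda>x. Z x * Yh x)" 
    by (rule bnd_int[OF P _, where B=1]) (use ae_prod_bnd[OF Zb Yhb] in auto)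
  have iYhY: "integrable P (\<lambda>x. Yh x * Y x)" 
    by (rule bnd_int[OF P _, where B=1]) (use Yb Yhb in \<open>auto simp: abs_mult intro: mult_le_one\<close>)
  have iYYh: "integrable P (\<lambda>x. Y x * Yh x)" 
    by (rule bnd_int[OF P _, where B=1]) (use Yb Yhb in \<open>auto simp: abs_mult intro: mult_le_one\<close>)
  have iYY: "integrable P (\<lambda>x. Y x * Y x)" 
    by (rule bnd_int[OF P _, where B=1]) (use Yb in \<open>auto simp: abs_mult intro: mult_le_one\<close>)
  have iYhYh: "integrable P (\<lambda>x. Yh x * Yh x)" 
    by (rule bnd_int[OF P _, where B=1]) (use Yhb in \<open>auto simp: abs_mult intro: mult_le_one\<close>)
  have ihh: "integrable P (\<lambda>x. h x * h x)" 
    by (rule bnd_int[OF P _, where B=1]) (use hb in \<open>auto simp: abs_mult intro: mult_le_one\<close>)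
  have ihY: "integrable P (\<lambda>x. h x * Y x)" 
    by (rule bnd_int[OF P _, where B=1]) (use hb Yb in \<open>auto simp: abs_mult intro: mult_le_one\<close>)
  have ihY': "integrable P (\<lambda>x. Y x * h x)" 
    by (rule bnd_int[OF P _, where B=1]) (use hb Yb in \<open>auto simp: abs_mult intro: mult_le_one\<close>)
  define \<mu> where "\<mu> = (\<integral>x. Y x \<partial>P)"
  define \<nu> where "\<nu> = (\<integral>x. Yh x \<partial>P)"
  define m where "m = (\<integral>x. h x \<partial>P)"
  have EZ: "(\<integral>x. Z x \<partial>P) = \<mu>" unfolding Z_def \<mu>_def using real_cond_exp_int(2)[OF iY] .
  have EZZ: "(\<integral>x. Z x * Z x \<partial>P) = (\<integral>x. Z x * Y x \<partial>P)"
    using real_cond_exp_intg(2)[OF iZY ZG] unfolding Z_def by simp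
  have EYhZ: "(\<integral>x. Yh x * Z x \<partial>P) = (\<integral>x. Yh x * Y x \<partial>P)"
    using real_cond_exp_intg(2)[OF iYhY] unfolding Z_def by simp
  define C where "C = covariance P Y Yh"
  have C1: "C = (\<integral>x. Y x * Yh x \<partial>P) - \<mu> * \<nu>"
    unfolding C_def \<mu>_def \<nu>_def by (rule cov_expand[OF P iY iYh iYYh])
  have C2: "covariance P Z Yh = (\<integral>x. Z x * Yh x \<partial>P) - \<mu> * \<nu>"
    using cov_expand[OF P iZ iYh iZYh] EZ unfolding \<nu>_def by simp
  have C3: "C = covariance P Z Yh"
    using C1 C2 EYhZ by (simp add: mult.commute)
  have VZ: "covariance P Z Z = (\<integral>x. Z x * Z x \<partial>P) - \<mu>\<^sup>2"
    using cov_expand[OF P iZ iZ iZZ] EZ by (simp add: power2_eq_square)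
  have VYh: "covariance P Yh Yh = (\<integral>x. Yh x * Yh x \<partial>P) - \<nu>\<^sup>2"
    using cov_expand[OF P iYh iYh iYhYh] unfolding \<nu>_def by (simp add: power2_eq_square)
  have "(\<integral>x. Yh x * Yh x \<partial>P) \<le> \<nu>"
    unfolding \<nu>_def by (rule integral_mono[OF iYhYh iYh]) (use Yhb in \<open>auto intro: mult_left_le_one_le\<close>)
  moreover have "0 \<le> (\<nu> - 1/2)\<^sup>2" by simp
  ultimately have VYh_le: "covariance P Yh Yh \<le> 1/4"
    using VYh unfolding power2_eq_square by (simp add: algebra_simps)
  define l where "l = 4 * C"
  have "(\<integral>x. 2 * l * ((Z x - \<mu>) * (Yh x - \<nu>)) \<partial>P)
        \<le> (\<integral>x. (Z x - \<mu>) * (Z x - \<mu>) + l\<^sup>2 * ((Yh x - \<nu>) * (Yh x - \<nu>)) \<partial>P)"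
  proof (rule integral_mono)
    show "integrable P (\<lambda>x. 2 * l * ((Z x - \<mu>) * (Yh x - \<nu>)))"
      using int_shift(1)[OF P iZ iYh iZYh] by auto
    show "integrable P (\<lambda>x. (Z x - \<mu>) * (Z x - \<mu>) + l\<^sup>2 * ((Yh x - \<nu>) * (Yh x - \<nu>)))"
      using int_shift(1)[OF P iZ iZ iZZ] int_shift(1)[OF P iYh iYh iYhYh] by auto
    fix x
    have "0 \<le> ((Z x - \<mu>) - l * (Yh x - \<nu>))\<^sup>2" by simp
    then show "2 * l * ((Z x - \<mu>) * (Yh x - \<nu>)) \<le> (Z x - \<mu>) * (Z x - \<mu>) + l\<^sup>2 * ((Yh x - \<nu>) * (Yh x - \<nu>))"
      by (simp add: power2_eq_square algebra_simps)
  qed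
  also have "\<dots> = covariance P Z Z + l\<^sup>2 * covariance P Yh Yh"
    unfolding covariance_def EZ \<nu>_def[symmetric]
    using int_shift(1)[OF P iZ iZ iZZ] int_shift(1)[OF P iYh iYh iYhYh] by simp
  finally have "2 * l * C \<le> covariance P Z Z + l\<^sup>2 * covariance P Yh Yh"
    unfolding C3 covariance_def EZ \<nu>_def[symmetric] by simp
  moreover have "l\<^sup>2 * covariance P Yh Yh \<le> l\<^sup>2 * (1/4)"
    by (rule mult_left_mono[OF VYh_le]) simp
  moreover have "2 * l * C = 8 * C\<^sup>2" "l\<^sup>2 * (1/4) = 4 * C\<^sup>2"
    unfolding l_def by (simp_all add: power2_eq_square)
  ultimately have key: "4 * C\<^sup>2 \<le> (\<integral>x. Z x * Z x \<partial>P) - \<mu>\<^sup>2"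
    using VZ by linarith
  have L: "(\<integral>x. (Y x - Z x)\<^sup>2 \<partial>P) = (\<integral>x. Y x * Y x \<partial>P) - (\<integral>x. Z x * Z x \<partial>P)"
  proof -
    have "(\<lambda>x. (Y x - Z x)\<^sup>2) = (\<lambda>x. Y x * Y x - 2 * (Z x * Y x) + Z x * Z x)"
      by (auto simp: fun_eq_iff power2_eq_square algebra_simps)
    then show ?thesis using iYY iZY iZZ EZZ by simp
  qed
  have R: "(\<integral>x. (Y x - h x)\<^sup>2 \<partial>P) = (\<integral>x. Y x * Y x \<partial>P) - 2 * (\<integral>x. h x * Y x \<partial>P) + (\<integral>x. h x * h x \<partial>P)"
  proof -
    have "(\<lambda>x. (Y x - h x)\<^sup>2) = (\<lambda>x. Y x * Y x - 2 * (h x * Y x) + h x * h x)"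
      by (auto simp: fun_eq_iff power2_eq_square algebra_simps)
    then show ?thesis using iYY ihY ihh by simp
  qed
  have Ch: "covariance P h Y = (\<integral>x. h x * Y x \<partial>P) - m * \<mu>"
    unfolding m_def \<mu>_def by (rule cov_expand[OF P ih iY ihY])
  have Vh: "covariance P h h = (\<integral>x. h x * h x \<partial>P) - m\<^sup>2"
    using cov_expand[OF P ih ih ihh] unfolding m_def by (simp add: power2_eq_square)
  have "0 \<le> covariance P h h" by (rule cov_self_nonneg)
  have "(\<integral>x. (Y x - Z x)\<^sup>2 \<partial>P) + 4 * C\<^sup>2 \<le> (\<integral>x. (Y x - h x)\<^sup>2 \<partial>P) + 2 * \<alpha>"
  proof -
    have "0 \<le> (m - \<mu>)\<^sup>2" by simp
    hence "0 \<le> m\<^sup>2 - 2 * (m * \<mu>) + \<mu>\<^sup>2" by (simp add: power2_diff)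
    moreover have "covariance P h Y \<le> \<alpha>" using cov by linarith
    ultimately show ?thesis
      using L R key Ch Vh \<open>0 \<le> covariance P h h\<close> by linarith
  qed
  then show ?thesis unfolding Z_def C_def .
qed



theorem corollary2:
  fixes M :: "'a measure" and N :: "'x measure"
    and X :: "'a \<Rightarrow> 'x" and Y Yh :: "'a \<Rightarrow> real"
    and F :: "('x \<Rightarrow> real) set" and S :: "'x set"
    and g :: "real \<Rightarrow> real" and \<alpha> \<eta> :: real
  assumes "prob_space M"
    and "X \<in> measurable M N"
    and "Y \<in> borel_measurable M" and "Yh \<in> borel_measurable M"
    and "\<And>\<omega>. \<omega> \<in> space M \<Longrightarrow> Y \<omega> \<in> {0..1}"
    and "\<And>\<omega>. \<omega> \<in> space M \<Longrightarrow> Yh \<omega> \<in> {0..1}"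
    and "\<And>f. f \<in> F \<Longrightarrow> f \<in> borel_measurable N"
    and "\<And>f x. f \<in> F \<Longrightarrow> x \<in> space N \<Longrightarrow> f x \<in> {0..1}"
    and "\<alpha> \<ge> 0"
    and "S \<in> sets N"
    and "measure M {\<omega> \<in> space M. X \<omega> \<in> S} > 0"
    and "alpha_indist M X F Y S \<alpha>"
    and "g \<in> borel_measurable borel"
    and "\<And>t. t \<in> {0..1} \<Longrightarrow> g t \<in> {0..1}"
    and "\<eta> \<ge> 0"
    and "(\<integral>\<omega>. (Y \<omega> - g (Yh \<omega>))\<^sup>2 \<partial>cond_event M X S)
         \<le> (\<integral>\<omega>. (Y \<omega> - cond_exp_given (cond_event M X S) Y Yh \<omega>)\<^sup>2 \<partial>cond_event M X S) + \<eta>"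
    and "f \<in> F"
  shows "(\<integral>\<omega>. (Y \<omega> - g (Yh \<omega>))\<^sup>2 \<partial>cond_event M X S)
           + 4 * (covariance (cond_event M X S) Y Yh)\<^sup>2
         \<le> (\<integral>\<omega>. (Y \<omega> - f (X \<omega>))\<^sup>2 \<partial>cond_event M X S) + 2 * \<alpha> + \<eta>"
  proof -
  note assms(2,3,4)[measurable]
  interpret M: prob_space M by fact
  define A where "A = {\<omega> \<in> space M. X \<omega> \<in> S}"
  have A: "A \<in> sets M" unfolding A_def using assms(10) by measurable
  define P where "P = cond_event M X S"
  have P_def': "P = uniform_measure M A" unfolding P_def cond_event_def A_def ..
  have spP: "space P = space M" and setsP: "sets P = sets M" unfolding P_def' by simp_all
  have "emeasure M A \<noteq> 0" using assms(11) unfolding A_def[symmetric]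
    by (auto simp: measure_def)
  moreover have "emeasure M A \<noteq> \<infinity>" by simp
  ultimately have Pp: "prob_space P" unfolding P_def' by (rule prob_space_uniform_measure)
  define G where "G = vimage_algebra (space M) Yh borel"
  have sG: "sets G \<subseteq> sets M"
  proof
    fix B assume "B \<in> sets G"
    then obtain C where "C \<in> sets borel" "B = Yh -` C \<inter> space M"
      unfolding G_def by (subst (asm) sets_vimage_algebra2) auto
    then show "B \<in> sets M" using measurable_sets[OF assms(4)] by simp
  qed
  have subG: "subalgebra P G" unfolding subalgebra_def G_def using sG spP setsP
    by (simp add: G_def)
  have YhG: "Yh \<in> borel_measurable G" unfolding G_def
    by (rule measurable_vimage_algebra1) simp
  have mP: "\<And>h. h \<in> borel_measurable M \<Longrightarrow> h \<in> borel_measurable P"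
    using measurable_cong_sets[OF setsP refl, of borel] by blast
  have hm: "(\<lambda>\<omega>. f (X \<omega>)) \<in> borel_measurable M"
    using measurable_comp[OF assms(2) assms(7)[OF assms(17)]] by (simp add: comp_def)
  have hb: "\<And>x. x \<in> space P \<Longrightarrow> f (X x) \<in> {0..1}"
    using assms(8)[OF assms(17)] measurable_space[OF assms(2)] spP by auto
  have cov: "\<bar>covariance P (\<lambda>\<omega>. f (X \<omega>)) Y\<bar> \<le> \<alpha>"
    using assms(12,17) unfolding alpha_indist_def P_def by blast
  have main: "(\<integral>x. (Y x - real_cond_exp P G Y x)\<^sup>2 \<partial>P) + 4 * (covariance P Y Yh)\<^sup>2
         \<le> (\<integral>x. (Y x - f (X x))\<^sup>2 \<partial>P) + 2 * \<alpha>"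
    by (rule abstract_main[OF Pp subG mP[OF assms(3)] YhG mP[OF hm] _ _ hb cov])
       (use assms(5,6) spP in auto)
  have ce: "cond_exp_given P Y Yh = real_cond_exp P G Y"
    unfolding cond_exp_given_def G_def spP ..
  show ?thesis using main assms(16) unfolding P_def[symmetric] ce by linarith
qed

end
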